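(* Let $f$ be a complex-valued harmonic function on $\mathbb{C}$. If $\operatorname{int}S\neq\varnothing$, then $f(\mathbb{C})$ is either a single point or a line. In either case, $S=\mathbb{C}$ and there exists $w_0\in\mathbb{C}$ with $\mathrm{Val}(f,w_0)=\infty$.
   Context: Writing $f=u+iv$, $J_f=u_xv_y-u_yv_x$ and $S=\{z\in\mathbb{C}: J_f(z)=0\}$. $\mathrm{Val}(f,w)$ is the number (possibly infinite) of distinct $z\in\mathbb{C}$ with $f(z)=w$. *)

theory Defs
  imports "HOL-Analysis.Analysis"
begin

definition dx :: "(complex \<Rightarrow> 'a::real_normed_vector) \<Rightarrow> complex \<Rightarrow> 'a" where
  "dx g z = vector_derivative (\<lambda>t::real. g (z + of_real t)) (at 0)"

definition dy :: "(complex \<Rightarrow> 'a::real_normed_vector) \<Rightarrow> complex \<Rightarrow> 'a" where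
  "dy g z = vector_derivative (\<lambda>t::real. g (z + \<i> * of_real t)) (at 0)"

definition harmonic :: "(complex \<Rightarrow> complex) \<Rightarrow> bool" where
  "harmonic f \<longleftrightarrow>
     (\<forall>z. f differentiable at z) \<and>
     (\<forall>z. dx f differentiable at z) \<and> (\<forall>z. dy f differentiable at z) \<and>
     continuous_on UNIV (dx (dx f)) \<and> continuous_on UNIV (dy (dx f)) \<and>
     continuous_on UNIV (dx (dy f)) \<and> continuous_on UNIV (dy (dy f)) \<and>
     (\<forall>z. dx (dx f) z + dy (dy f) z = 0)"

text \<open>Jacobian J_f = u_x v_y - u_y v_x where f = u + i v.\<close>
definition jac :: "(complex \<Rightarrow> complex) \<Rightarrow> complex \<Rightarrow> real" where
  "jac f z = Re (dx f z) * Im (dy f z) - Re (dy f z) * Im (dx f z)"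

definition critset :: "(complex \<Rightarrow> complex) \<Rightarrow> complex set" where
  "critset f = {z. jac f z = 0}"

definition Val_infinite :: "(complex \<Rightarrow> complex) \<Rightarrow> complex \<Rightarrow> bool" where
  "Val_infinite f w \<longleftrightarrow> infinite {z. f z = w}"

definition is_line :: "complex set \<Rightarrow> bool" where
  "is_line L \<longleftrightarrow> (\<exists>a b. b \<noteq> 0 \<and> L = {a + of_real t * b | t. True})"

end

theory Submission imports Defs "HOL-Complex_Analysis.Complex_Analysis" begin

lemma line_hasderiv:
  fixes g :: "complex \<Rightarrow> 'a::real_normed_vector"
  assumes "(g has_derivative D) (at (w + of_real s * e))"
  shows "((\<lambda>t::real. g (w + of_real t * e)) has_vector_derivative D e) (at s)"
proof -
  have i: "((\<lambda>t::real. w + of_real t * e) has_derivative (\<lambda>h. of_real h * e)) (at s)"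
  proof -
    have "bounded_linear (\<lambda>h::real. of_real h * e)"
      using bounded_linear_mult_const[OF bounded_linear_of_real] by blast
    then have "((\<lambda>h::real. of_real h * e) has_derivative (\<lambda>h. of_real h * e)) (at s)"
      by (rule bounded_linear_imp_has_derivative)
    then show ?thesis by (auto intro!: derivative_eq_intros)
  qed
  have "((\<lambda>t::real. g (w + of_real t * e)) has_derivative (\<lambda>h. D (of_real h * e))) (at s)"
    using has_derivative_compose[OF i assms] by (simp add: o_def)
  moreover have "linear D" using assms has_derivative_linear by blast
  then have "(\<lambda>h. D (of_real h * e)) = (\<lambda>h. h *\<^sub>R D e)"
    by (auto simp: scaleR_conv_of_real[symmetric] linear_scale)
  ultimately show ?thesis unfolding has_vector_derivative_def by simp
qed

lemma dx_eq:
  assumes "(g has_derivative D) (at p)"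
  shows "dx g p = D 1"
proof -
  have "((\<lambda>t::real. g (p + of_real t * 1)) has_vector_derivative D 1) (at 0)"
    by (rule line_hasderiv) (use assms in simp)
  then show ?thesis unfolding dx_def by (simp add: vector_derivative_at)
qed

lemma dy_eq:
  assumes "(g has_derivative D) (at p)"
  shows "dy g p = D \<i>"
proof -
  have "((\<lambda>t::real. g (p + of_real t * \<i>)) has_vector_derivative D \<i>) (at 0)"
    by (rule line_hasderiv) (use assms in simp)
  then show ?thesis unfolding dy_def by (simp add: vector_derivative_at mult.commute)
qed

lemma real_line_deriv:
  fixes g :: "complex \<Rightarrow> 'a::real_normed_vector"
  assumes "(g has_derivative D) (at (w + of_real s * e))" "bounded_linear L"
  shows "((\<lambda>t::real. L (g (w + of_real t * e))) has_real_derivative L (D e)) (at s)"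
proof -
  have "((\<lambda>t::real. L (g (w + of_real t * e))) has_vector_derivative L (D e)) (at s)"
    using bounded_linear.has_vector_derivative[OF assms(2) line_hasderiv[OF assms(1)]] .
  then show ?thesis by (simp add: has_real_derivative_iff_has_vector_derivative)
qed

lemma dx_line_deriv:
  assumes "g differentiable at (w + of_real s)" "bounded_linear L"
  shows "((\<lambda>t::real. L (g (w + of_real t))) has_real_derivative L (dx g (w + of_real s))) (at s)"
proof -
  obtain D where D: "(g has_derivative D) (at (w + of_real s))"
    using assms(1) unfolding differentiable_def by blast
  show ?thesis using real_line_deriv[of g D w s 1 L] D assms(2) dx_eq[OF D] by simp
qed

lemma dy_line_deriv:
  assumes "g differentiable at (w + \<i> * of_real s)" "bounded_linear L"
  shows "((\<lambda>t::real. L (g (w + \<i> * of_real t))) has_real_derivative L (dy g (w + \<i> * of_real s))) (at s)"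
proof -
  obtain D where D: "(g has_derivative D) (at (w + \<i> * of_real s))"
    using assms(1) unfolding differentiable_def by blast
  show ?thesis using real_line_deriv[of g D w s \<i> L] D assms(2) dy_eq[OF D] by (simp add: mult.commute)
qed


lemma clairaut_aux:
  fixes f :: "complex \<Rightarrow> complex" and L :: "complex \<Rightarrow> real"
  assumes d0: "\<forall>z. f differentiable at z" and dxd: "\<forall>z. dx f differentiable at z"
    and dyd: "\<forall>z. dy f differentiable at z" and L: "bounded_linear L" and h: "h > 0"
  shows "\<exists>p1 p2. norm (p1 - z) < 2*h \<and> norm (p2 - z) < 2*h \<and> L (dy (dx f) p1) = L (dx (dy f) p2)"
proof -
  define \<phi> where "\<phi> \<sigma> = L (f ((z + \<i> * of_real h) + of_real \<sigma>)) - L (f (z + of_real \<sigma>))" for \<sigma>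
  define \<phi>' where "\<phi>' \<sigma> = L (dx f ((z + \<i> * of_real h) + of_real \<sigma>)) - L (dx f (z + of_real \<sigma>))" for \<sigma>
  have "(\<phi> has_real_derivative \<phi>' \<sigma>) (at \<sigma>)" for \<sigma>
    unfolding \<phi>_def \<phi>'_def using d0 L by (intro DERIV_diff dx_line_deriv) auto
  then obtain \<sigma>1 where s1: "0 < \<sigma>1" "\<sigma>1 < h"
    and e1: "\<phi> h - \<phi> 0 = (h - 0) * (L (dx f ((z + \<i> * of_real h) + of_real \<sigma>1)) - L (dx f (z + of_real \<sigma>1)))"
    using MVT2[OF h, of \<phi> \<phi>'] unfolding \<phi>'_def by blast
  define \<psi> where "\<psi> \<tau> = L (dx f ((z + of_real \<sigma>1) + \<i> * of_real \<tau>))" for \<tau>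
  have "(\<psi> has_real_derivative L (dy (dx f) ((z + of_real \<sigma>1) + \<i> * of_real \<tau>))) (at \<tau>)" for \<tau>
    unfolding \<psi>_def using dxd L by (intro dy_line_deriv) auto
  then obtain \<tau>1 where t1: "0 < \<tau>1" "\<tau>1 < h"
    and e2: "\<psi> h - \<psi> 0 = (h - 0) * L (dy (dx f) ((z + of_real \<sigma>1) + \<i> * of_real \<tau>1))"
    using MVT2[OF h, of \<psi> "\<lambda>\<tau>. L (dy (dx f) ((z + of_real \<sigma>1) + \<i> * of_real \<tau>))"] by blast
  have "\<psi> h = L (dx f ((z + \<i> * of_real h) + of_real \<sigma>1))" "\<psi> 0 = L (dx f (z + of_real \<sigma>1))"
    unfolding \<psi>_def by (simp_all add: algebra_simps)
  with e1 e2 have E1: "\<phi> h - \<phi> 0 = h * (h * L (dy (dx f) ((z + of_real \<sigma>1) + \<i> * of_real \<tau>1)))"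
    by simp
  define \<kappa> where "\<kappa> \<tau> = L (f ((z + of_real h) + \<i> * of_real \<tau>)) - L (f (z + \<i> * of_real \<tau>))" for \<tau>
  define \<kappa>' where "\<kappa>' \<tau> = L (dy f ((z + of_real h) + \<i> * of_real \<tau>)) - L (dy f (z + \<i> * of_real \<tau>))" for \<tau>
  have "(\<kappa> has_real_derivative \<kappa>' \<tau>) (at \<tau>)" for \<tau>
    unfolding \<kappa>_def \<kappa>'_def using d0 L by (intro DERIV_diff dy_line_deriv) auto
  then obtain \<tau>2 where t2: "0 < \<tau>2" "\<tau>2 < h"
    and e3: "\<kappa> h - \<kappa> 0 = (h - 0) * (L (dy f ((z + of_real h) + \<i> * of_real \<tau>2)) - L (dy f (z + \<i> * of_real \<tau>2)))"
    using MVT2[OF h, of \<kappa> \<kappa>'] unfolding \<kappa>'_def by blast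
  define \<omega> where "\<omega> \<sigma> = L (dy f ((z + \<i> * of_real \<tau>2) + of_real \<sigma>))" for \<sigma>
  have "(\<omega> has_real_derivative L (dx (dy f) ((z + \<i> * of_real \<tau>2) + of_real \<sigma>))) (at \<sigma>)" for \<sigma>
    unfolding \<omega>_def using dyd L by (intro dx_line_deriv) auto
  then obtain \<sigma>2 where s2: "0 < \<sigma>2" "\<sigma>2 < h"
    and e4: "\<omega> h - \<omega> 0 = (h - 0) * L (dx (dy f) ((z + \<i> * of_real \<tau>2) + of_real \<sigma>2))"
    using MVT2[OF h, of \<omega> "\<lambda>\<sigma>. L (dx (dy f) ((z + \<i> * of_real \<tau>2) + of_real \<sigma>))"] by blast
  have "\<omega> h = L (dy f ((z + of_real h) + \<i> * of_real \<tau>2))" "\<omega> 0 = L (dy f (z + \<i> * of_real \<tau>2))"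
    unfolding \<omega>_def by (simp_all add: algebra_simps)
  with e3 e4 have E2: "\<kappa> h - \<kappa> 0 = h * (h * L (dx (dy f) ((z + \<i> * of_real \<tau>2) + of_real \<sigma>2)))"
    by simp
  have "\<kappa> h - \<kappa> 0 = \<phi> h - \<phi> 0"
    unfolding \<kappa>_def \<phi>_def by (simp add: algebra_simps)
  with E1 E2 h have EQ: "L (dy (dx f) ((z + of_real \<sigma>1) + \<i> * of_real \<tau>1)) = L (dx (dy f) ((z + \<i> * of_real \<tau>2) + of_real \<sigma>2))"
    by simp
  have n1: "norm (((z + of_real \<sigma>1) + \<i> * of_real \<tau>1) - z) < 2*h"
  proof -
    have "norm (((z + of_real \<sigma>1) + \<i> * of_real \<tau>1) - z) = norm (of_real \<sigma>1 + \<i> * of_real \<tau>1)" by simp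
    also have "\<dots> \<le> norm (of_real \<sigma>1 :: complex) + norm (\<i> * of_real \<tau>1)" by (rule norm_triangle_ineq)
    also have "\<dots> < 2*h" using s1 t1 by (simp add: norm_mult)
    finally show ?thesis .
  qed
  have n2: "norm (((z + \<i> * of_real \<tau>2) + of_real \<sigma>2) - z) < 2*h"
  proof -
    have "norm (((z + \<i> * of_real \<tau>2) + of_real \<sigma>2) - z) = norm (of_real \<sigma>2 + \<i> * of_real \<tau>2)" by (simp add: algebra_simps)
    also have "\<dots> \<le> norm (of_real \<sigma>2 :: complex) + norm (\<i> * of_real \<tau>2)" by (rule norm_triangle_ineq)
    also have "\<dots> < 2*h" using s2 t2 by (simp add: norm_mult)
    finally show ?thesis .
  qed
  show ?thesis using EQ n1 n2 by blast
qed

lemma clairaut_L: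
  fixes f :: "complex \<Rightarrow> complex" and L :: "complex \<Rightarrow> real"
  assumes d0: "\<forall>z. f differentiable at z" and dxd: "\<forall>z. dx f differentiable at z"
    and dyd: "\<forall>z. dy f differentiable at z" and L: "bounded_linear L"
    and c1: "continuous_on UNIV (dy (dx f))" and c2: "continuous_on UNIV (dx (dy f))"
  shows "L (dy (dx f) z) = L (dx (dy f) z)"
proof (rule ccontr)
  assume ne: "L (dy (dx f) z) \<noteq> L (dx (dy f) z)"
  define e where "e = \<bar>L (dy (dx f) z) - L (dx (dy f) z)\<bar>"
  have e: "e > 0" using ne unfolding e_def by simp
  have "isCont (\<lambda>p. L (dy (dx f) p)) z"
    using c1 L by (intro bounded_linear.isCont[OF L]) (simp add: continuous_on_eq_continuous_at)
  then obtain d1 where d1: "d1 > 0" "\<And>p. dist p z < d1 \<Longrightarrow> dist (L (dy (dx f) p)) (L (dy (dx f) z)) < e/2"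
    using e unfolding continuous_at_eps_delta by (metis half_gt_zero)
  have "isCont (\<lambda>p. L (dx (dy f) p)) z"
    using c2 L by (intro bounded_linear.isCont[OF L]) (simp add: continuous_on_eq_continuous_at)
  then obtain d2 where d2: "d2 > 0" "\<And>p. dist p z < d2 \<Longrightarrow> dist (L (dx (dy f) p)) (L (dx (dy f) z)) < e/2"
    using e unfolding continuous_at_eps_delta by (metis half_gt_zero)
  define h where "h = min d1 d2 / 2"
  have h: "h > 0" using d1 d2 unfolding h_def by simp
  obtain p1 p2 where p: "norm (p1 - z) < 2*h" "norm (p2 - z) < 2*h" "L (dy (dx f) p1) = L (dx (dy f) p2)"
    using clairaut_aux[OF d0 dxd dyd L h] by blast
  have "dist p1 z < d1" "dist p2 z < d2" using p h_def by (auto simp: dist_norm)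
  then have "dist (L (dy (dx f) p1)) (L (dy (dx f) z)) < e/2" "dist (L (dx (dy f) p2)) (L (dx (dy f) z)) < e/2"
    using d1 d2 by auto
  moreover have "\<And>a1 b2 a b e::real. a1 = b2 \<Longrightarrow> \<bar>a1 - a\<bar> < e/2 \<Longrightarrow> \<bar>b2 - b\<bar> < e/2 \<Longrightarrow> \<bar>a - b\<bar> < e"
    by arith
  ultimately have "e < e" using p(3) unfolding e_def dist_real_def by blast
  then show False by simp
qed

lemma clairaut:
  fixes f :: "complex \<Rightarrow> complex"
  assumes "harmonic f"
  shows "dy (dx f) z = dx (dy f) z"
  using assms clairaut_L[of f Re z] clairaut_L[of f Im z] unfolding harmonic_def
  by (simp add: complex_eq_iff bounded_linear_Re bounded_linear_Im)


lemma lin_decomp: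
  assumes "linear D"
  shows "D k = of_real (Re k) * D 1 + of_real (Im k) * D \<i>"
proof -
  have "k = Re k *\<^sub>R 1 + Im k *\<^sub>R \<i>"
    by (simp add: complex_eq_iff)
  then have "D k = D (Re k *\<^sub>R 1 + Im k *\<^sub>R \<i>)" by simp
  also have "\<dots> = Re k *\<^sub>R D 1 + Im k *\<^sub>R D \<i>"
    using assms by (simp add: linear_add linear_scale)
  finally show ?thesis by (simp add: scaleR_conv_of_real)
qed

lemma cr_field:
  assumes "(g has_derivative D) (at z)" "D \<i> = \<i> * D 1"
  shows "(g has_field_derivative D 1) (at z)"
proof -
  have lin: "linear D" using assms(1) has_derivative_linear by blast
  have "D = (\<lambda>k. D 1 * k)"
  proof
    fix k
    show "D k = D 1 * k"
    proof -
      have "D k = D 1 * (of_real (Re k) + \<i> * of_real (Im k))"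
        using lin_decomp[OF lin, of k] assms(2) by (simp add: algebra_simps)
      then show ?thesis by (simp add: complex_eq[symmetric])
    qed
  qed
  then show ?thesis unfolding has_field_derivative_def using assms(1) by simp
qed

definition Hh :: "(complex \<Rightarrow> complex) \<Rightarrow> complex \<Rightarrow> complex" where
  "Hh f z = (dx f z - \<i> * dy f z) / 2"
definition Gh :: "(complex \<Rightarrow> complex) \<Rightarrow> complex \<Rightarrow> complex" where
  "Gh f z = cnj ((dx f z + \<i> * dy f z) / 2)"

lemma Hh_holo:
  assumes hf: "harmonic f"
  shows "Hh f holomorphic_on UNIV"
proof -
  have "\<exists>f'. (Hh f has_field_derivative f') (at z)" for z
  proof -
    obtain Da where Da: "(dx f has_derivative Da) (at z)"
      using hf unfolding harmonic_def differentiable_def by blast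
    obtain Db where Db: "(dy f has_derivative Db) (at z)"
      using hf unfolding harmonic_def differentiable_def by blast
    have d: "(Hh f has_derivative (\<lambda>k. (Da k - \<i> * Db k) / 2)) (at z)"
      unfolding Hh_def[abs_def] by (auto intro!: derivative_eq_intros Da Db)
    have "Da 1 = dx (dx f) z" "Da \<i> = dy (dx f) z" "Db 1 = dx (dy f) z" "Db \<i> = dy (dy f) z"
      using dx_eq[OF Da] dy_eq[OF Da] dx_eq[OF Db] dy_eq[OF Db] by auto
    moreover have "dy (dx f) z = dx (dy f) z" by (rule clairaut[OF hf])
    moreover have "dx (dx f) z + dy (dy f) z = 0" using hf unfolding harmonic_def by blast
    ultimately have e: "Da \<i> = Db 1" "Db \<i> = - Da 1"
      by (auto simp: eq_neg_iff_add_eq_0 add.commute)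
    have "(Da \<i> - \<i> * Db \<i>) / 2 = \<i> * ((Da 1 - \<i> * Db 1) / 2)"
      unfolding e by (simp add: algebra_simps)
    then show ?thesis using cr_field[OF d] by blast
  qed
  then show ?thesis by (simp add: holomorphic_on_open)
qed

lemma Gh_holo:
  assumes hf: "harmonic f"
  shows "Gh f holomorphic_on UNIV"
proof -
  have "\<exists>f'. (Gh f has_field_derivative f') (at z)" for z
  proof -
    obtain Da where Da: "(dx f has_derivative Da) (at z)"
      using hf unfolding harmonic_def differentiable_def by blast
    obtain Db where Db: "(dy f has_derivative Db) (at z)"
      using hf unfolding harmonic_def differentiable_def by blast
    have d: "(Gh f has_derivative (\<lambda>k. cnj ((Da k + \<i> * Db k) / 2))) (at z)"
      unfolding Gh_def[abs_def] by (auto intro!: derivative_eq_intros Da Db)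
    have "Da 1 = dx (dx f) z" "Da \<i> = dy (dx f) z" "Db 1 = dx (dy f) z" "Db \<i> = dy (dy f) z"
      using dx_eq[OF Da] dy_eq[OF Da] dx_eq[OF Db] dy_eq[OF Db] by auto
    moreover have "dy (dx f) z = dx (dy f) z" by (rule clairaut[OF hf])
    moreover have "dx (dx f) z + dy (dy f) z = 0" using hf unfolding harmonic_def by blast
    ultimately have e: "Da \<i> = Db 1" "Db \<i> = - Da 1"
      by (auto simp: eq_neg_iff_add_eq_0 add.commute)
    have "cnj ((Da \<i> + \<i> * Db \<i>) / 2) = \<i> * cnj ((Da 1 + \<i> * Db 1) / 2)"
      unfolding e by (simp add: complex_eq_iff)
    then show ?thesis using cr_field[OF d] by blast
  qed
  then show ?thesis by (simp add: holomorphic_on_open)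
qed

lemma jac_aux: "Re a * Im b - Re b * Im a = (cmod ((a - \<i> * b) / 2))^2 - (cmod (cnj ((a + \<i> * b) / 2)))^2"
  unfolding cmod_power2 by (simp add: power2_eq_square field_simps)

lemma jac_HG: "jac f z = (cmod (Hh f z))^2 - (cmod (Gh f z))^2"
  unfolding jac_def Hh_def Gh_def by (rule jac_aux)

lemma dx_aux: "a = (a - \<i> * b) / 2 + cnj (cnj ((a + \<i> * b) / 2))" by (simp add: field_simps)
lemma dy_aux: "b = \<i> * ((a - \<i> * b) / 2 - cnj (cnj ((a + \<i> * b) / 2)))" by (simp add: field_simps)

lemma dx_HG: "dx f z = Hh f z + cnj (Gh f z)"
  unfolding Hh_def Gh_def by (rule dx_aux)

lemma dy_HG: "dy f z = \<i> * (Hh f z - cnj (Gh f z))"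
  unfolding Hh_def Gh_def by (rule dy_aux)

lemma f_deriv:
  assumes "harmonic f"
  shows "(f has_derivative (\<lambda>k. of_real (Re k) * dx f z + of_real (Im k) * dy f z)) (at z)"
proof -
  obtain D where D: "(f has_derivative D) (at z)"
    using assms unfolding harmonic_def differentiable_def by blast
  have "D k = of_real (Re k) * dx f z + of_real (Im k) * dy f z" for k
    using lin_decomp[OF has_derivative_linear[OF D], of k] unfolding dx_eq[OF D] dy_eq[OF D] .
  then have "D = (\<lambda>k. of_real (Re k) * dx f z + of_real (Im k) * dy f z)" by (intro ext)
  then show ?thesis using D by simp
qed


lemma exp_bounded_const:
  fixes F :: "complex \<Rightarrow> complex"
  assumes hol: "F holomorphic_on UNIV" and lt: "\<And>z. Re (F z) < t"
  shows "F z = F 0"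
proof -
  have "(\<lambda>z. exp (F z)) holomorphic_on UNIV" using hol by (intro holomorphic_intros)
  moreover have "bounded (range (\<lambda>z. exp (F z)))"
    unfolding bounded_iff using lt by (intro exI[of _ "exp t"]) (auto intro: less_imp_le)
  ultimately have "(\<lambda>z. exp (F z)) constant_on UNIV" by (rule Liouville_theorem)
  then obtain c where c: "\<And>z. exp (F z) = c" unfolding constant_on_def by auto
  have d0: "(F has_field_derivative 0) (at x within UNIV)" for x
  proof -
    have dF: "(F has_field_derivative deriv F x) (at x)"
      using holomorphic_derivI[OF hol open_UNIV, of x UNIV] by simp
    have "((\<lambda>z. exp (F z)) has_field_derivative exp (F x) * deriv F x) (at x)"
      by (rule DERIV_chain2[OF DERIV_exp dF])
    moreover have "((\<lambda>z. exp (F z)) has_field_derivative 0) (at x)"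
      unfolding c by simp
    ultimately have "exp (F x) * deriv F x = 0" by (rule DERIV_unique)
    then have "deriv F x = 0" by simp
    then show ?thesis using dF by simp
  qed
  obtain k where "\<forall>x\<in>UNIV. F x = k"
    using has_field_derivative_zero_constant[OF convex_UNIV d0] by blast
  then show ?thesis by simp
qed

lemma ReF_surj:
  fixes F :: "complex \<Rightarrow> complex"
  assumes hol: "F holomorphic_on UNIV" and nc: "\<not> (\<forall>z. F z = F 0)"
  shows "\<exists>z. Re (F z) = t"
proof (rule ccontr)
  assume no: "\<not> (\<exists>z. Re (F z) = t)"
  have cont: "continuous_on UNIV (\<lambda>z. Re (F z))"
    using holomorphic_on_imp_continuous_on[OF hol] by (intro continuous_intros)
  have conn: "connected (range (\<lambda>z. Re (F z)))"
    by (rule connected_continuous_image[OF cont connected_UNIV])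
  have "(\<forall>z. Re (F z) < t) \<or> (\<forall>z. Re (F z) > t)"
  proof (rule ccontr)
    assume "\<not> ?thesis"
    then obtain p q where "Re (F p) \<ge> t" "Re (F q) \<le> t" by (auto simp: not_less)
    then have "t \<in> range (\<lambda>z. Re (F z))"
      using connectedD_interval[OF conn, of "Re (F q)" "Re (F p)" t] by auto
    with no show False by auto
  qed
  then show False
  proof
    assume "\<forall>z. Re (F z) < t"
    then have "\<forall>z. F z = F 0" using exp_bounded_const[OF hol] by blast
    with nc show False by blast
  next
    assume a: "\<forall>z. Re (F z) > t"
    have "(\<lambda>z. - F z) holomorphic_on UNIV" using hol by (intro holomorphic_intros)
    moreover have "\<And>z. Re (- F z) < - t" using a by simp
    ultimately have "\<forall>z. - F z = - F 0" using exp_bounded_const[of "\<lambda>z. - F z"] by blast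
    with nc show False by simp
  qed
qed

lemma level_infinite:
  fixes F :: "complex \<Rightarrow> complex"
  assumes hol: "F holomorphic_on UNIV" and nc: "\<not> (\<forall>z. F z = F 0)"
  shows "infinite {z. Re (F z) = c}"
proof
  assume fin: "finite {z. Re (F z) = c}"
  define S where "S = {z. Re (F z) = c}"
  have "connected (UNIV - S)"
    using fin unfolding S_def by (intro connected_open_diff_countable) (auto intro: countable_finite)
  moreover have cont: "continuous_on (UNIV - S) (\<lambda>z. Re (F z))"
    using holomorphic_on_imp_continuous_on[OF hol] by (intro continuous_intros) (auto intro: continuous_on_subset)
  ultimately have conn: "connected ((\<lambda>z. Re (F z)) ` (UNIV - S))"
    by (rule connected_continuous_image[rotated])
  obtain p where p: "Re (F p) = c - 1" using ReF_surj[OF hol nc] by blast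
  obtain q where q: "Re (F q) = c + 1" using ReF_surj[OF hol nc] by blast
  have "p \<in> UNIV - S" "q \<in> UNIV - S" using p q unfolding S_def by auto
  then have "Re (F p) \<in> (\<lambda>z. Re (F z)) ` (UNIV - S)" "Re (F q) \<in> (\<lambda>z. Re (F z)) ` (UNIV - S)"
    by blast+
  then have "c \<in> (\<lambda>z. Re (F z)) ` (UNIV - S)"
    using connectedD_interval[OF conn, of "Re (F p)" "Re (F q)" c] p q by auto
  then show False unfolding S_def by auto
qed


lemma lambda_exists:
  assumes hf: "harmonic f" and int: "interior (critset f) \<noteq> {}"
  shows "\<exists>lm. cmod lm = 1 \<and> (\<forall>z. Hh f z = lm * Gh f z)"
proof -
  let ?H = "Hh f" and ?G = "Gh f"
  have holH: "?H holomorphic_on UNIV" by (rule Hh_holo[OF hf])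
  have holG: "?G holomorphic_on UNIV" by (rule Gh_holo[OF hf])
  obtain z0 where "z0 \<in> interior (critset f)" using int by blast
  then obtain r where r: "r > 0" "ball z0 r \<subseteq> critset f"
    using mem_interior by blast
  have eqn: "cmod (?H z) = cmod (?G z)" if "z \<in> ball z0 r" for z
  proof -
    have "jac f z = 0" using r that unfolding critset_def by auto
    then have "(cmod (?H z))^2 = (cmod (?G z))^2" using jac_HG[of f z] by simp
    then show ?thesis by (simp add: power2_eq_iff_nonneg)
  qed
  show ?thesis
  proof (cases "\<forall>z\<in>ball z0 r. ?G z = 0")
    case True
    then have H0: "\<forall>z\<in>ball z0 r. ?H z = 0" using eqn by auto
    have "?H z = 0" for z
      using analytic_continuation_open[of "ball z0 r" UNIV ?H "\<lambda>_. 0" z] H0 r holH by auto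
    moreover have "?G z = 0" for z
      using analytic_continuation_open[of "ball z0 r" UNIV ?G "\<lambda>_. 0" z] True r holG by auto
    ultimately show ?thesis by (intro exI[of _ 1]) auto
  next
    case False
    then obtain z1 where z1: "z1 \<in> ball z0 r" "?G z1 \<noteq> 0" by blast
    have "isCont ?G z1"
      using holomorphic_on_imp_continuous_on[OF holG] by (simp add: continuous_on_eq_continuous_at)
    then obtain d where d: "d > 0" "\<And>z. dist z z1 < d \<Longrightarrow> dist (?G z) (?G z1) < cmod (?G z1)"
      using z1(2) unfolding continuous_at_eps_delta by (metis zero_less_norm_iff)
    obtain r' where r': "r' > 0" "ball z1 r' \<subseteq> ball z0 r"
      using z1(1) openE[OF open_ball] by blast
    define r1 where "r1 = min d r'"
    have r1: "r1 > 0" using d r' unfolding r1_def by simp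
    have Gnz: "?G z \<noteq> 0" if "z \<in> ball z1 r1" for z
      using d(2)[of z] that unfolding r1_def by (auto simp: dist_commute)
    have sub: "ball z1 r1 \<subseteq> ball z0 r" using r' unfolding r1_def by auto
    define Q where "Q z = ?H z / ?G z" for z
    have holQ: "Q holomorphic_on ball z1 r1"
      unfolding Q_def using Gnz
      by (intro holomorphic_intros holomorphic_on_subset[OF holH] holomorphic_on_subset[OF holG]) auto
    have nQ: "cmod (Q z) = 1" if "z \<in> ball z1 r1" for z
      using eqn[of z] Gnz[OF that] sub that unfolding Q_def by (auto simp: norm_divide)
    have "Q constant_on ball z1 r1"
      by (rule maximum_modulus_principle[OF holQ open_ball connected_ball open_ball order_refl, of z1])
         (use r1 nQ in auto)
    then obtain lm where lam: "\<And>z. z \<in> ball z1 r1 \<Longrightarrow> Q z = lm" unfolding constant_on_def by blast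
    have nl: "cmod lm = 1" using lam[of z1] nQ[of z1] r1 by auto
    have eqb: "?H z = lm * ?G z" if "z \<in> ball z1 r1" for z
      using lam[OF that] Gnz[OF that] unfolding Q_def by (auto simp: field_simps)
    have holL: "(\<lambda>z. lm * ?G z) holomorphic_on UNIV" using holG by (intro holomorphic_intros)
    have "?H z = lm * ?G z" for z
      using analytic_continuation_open[of "ball z1 r1" UNIV ?H "\<lambda>z. lm * ?G z" z] eqb r1 holH holL
      by auto
    with nl show ?thesis by blast
  qed
qed

lemma alg1: assumes "cmod m = 1" shows "m^2 * g + cnj g = m * of_real (2 * Re (m * g))"
proof -
  have u: "m * cnj m = 1" using complex_norm_square[of m] assms by simp
  have "m * of_real (2 * Re (m * g)) = m * (m * g + cnj (m * g))" by (simp only: complex_add_cnj)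
  also have "\<dots> = m^2 * g + (m * cnj m) * cnj g" by (simp add: algebra_simps power2_eq_square)
  finally show ?thesis using u by simp
qed
lemma alg2: assumes "cmod m = 1" shows "\<i> * (m^2 * g - cnj g) = m * of_real (- 2 * Im (m * g))"
proof -
  have u: "m * cnj m = 1" using complex_norm_square[of m] assms by simp
  have "m * of_real (- 2 * Im (m * g)) = \<i> * m * (m * g - cnj (m * g))"
    by (simp only: complex_diff_cnj) (simp add: algebra_simps)
  also have "\<dots> = \<i> * (m^2 * g - (m * cnj m) * cnj g)" by (simp add: algebra_simps power2_eq_square)
  finally show ?thesis using u by simp
qed
lemma alg3: assumes "cnj m * m = 1"
  shows "cnj m * (of_real x * (m * of_real p) + of_real y * (m * of_real q)) = of_real (x*p + y*q)"
proof -
  have "cnj m * (of_real x * (m * of_real p) + of_real y * (m * of_real q)) = (cnj m * m) * of_real (x*p + y*q)"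
    by (simp add: algebra_simps)
  then show ?thesis using assms by simp
qed

theorem lemma5p1:
  fixes f :: "complex \<Rightarrow> complex"
  assumes "harmonic f"
    and "interior (critset f) \<noteq> {}"
  shows "((\<exists>c. range f = {c}) \<or> is_line (range f)) \<and>
         critset f = UNIV \<and> (\<exists>w0. Val_infinite f w0)"
proof -
  note hf = assms(1)
  obtain lm where lm: "cmod lm = 1" "\<And>z. Hh f z = lm * Gh f z"
    using lambda_exists[OF assms] by blast
  have crit: "critset f = UNIV"
    unfolding critset_def using jac_HG[of f] lm by (auto simp: norm_mult)
  define m where "m = csqrt lm"
  have m2: "m^2 = lm" unfolding m_def by simp
  have nm: "cmod m = 1" unfolding m_def using lm by simp
  have u: "cnj m * m = 1" using complex_norm_square[of m] nm by (simp add: mult.commute)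
  define K where "K z = m * Gh f z" for z
  have holK: "K holomorphic_on UNIV" unfolding K_def[abs_def] using Gh_holo[OF hf] by (intro holomorphic_intros)
  have a: "dx f z = m * of_real (2 * Re (K z))" for z
    unfolding dx_HG[of f z] lm(2) K_def m2[symmetric] by (rule alg1[OF nm])
  have b: "dy f z = m * of_real (- 2 * Im (K z))" for z
    unfolding dy_HG[of f z] lm(2) K_def m2[symmetric] by (rule alg2[OF nm])
  have fd: "(f has_derivative (\<lambda>k. of_real (Re k) * (m * of_real (2 * Re (K z))) + of_real (Im k) * (m * of_real (- 2 * Im (K z))))) (at z)" for z
    using f_deriv[OF hf, of z] unfolding a b .
  have cd: "((\<lambda>z. cnj m * f z) has_derivative (\<lambda>k. of_real (Re k * (2 * Re (K z)) + Im k * (- 2 * Im (K z))))) (at z)" for z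
    using has_derivative_mult_right[OF fd[of z], of "cnj m"] unfolding alg3[OF u] .
  have "((\<lambda>z. Im (cnj m * f z)) has_derivative (\<lambda>k. 0)) (at z within UNIV)" for z
    using has_derivative_Im[OF cd[of z]] by simp
  then obtain c2 where c2: "\<And>z. Im (cnj m * f z) = c2"
    using has_derivative_zero_constant[OF convex_UNIV] by blast
  obtain F where F: "\<And>x. (F has_field_derivative 2 * K x) (at x)"
  proof -
    have "(\<lambda>z. 2 * K z) holomorphic_on UNIV" using holK by (intro holomorphic_intros)
    then obtain F where "\<And>x. x \<in> UNIV \<Longrightarrow> (F has_field_derivative 2 * K x) (at x within UNIV)"
      using holomorphic_convex_primitive'[OF convex_UNIV open_UNIV] by blast
    then show ?thesis using that by auto
  qed
  have holF: "F holomorphic_on UNIV"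
    using F by (auto simp: holomorphic_on_open)
  have "((\<lambda>z. Re (cnj m * f z) - Re (F z)) has_derivative (\<lambda>k. 0)) (at z within UNIV)" for z
  proof -
    have d1: "((\<lambda>z. Re (cnj m * f z)) has_derivative (\<lambda>k. Re k * (2 * Re (K z)) + Im k * (- 2 * Im (K z)))) (at z)"
      using has_derivative_Re[OF cd[of z]] by simp
    have d2: "((\<lambda>z. Re (F z)) has_derivative (\<lambda>k. Re (2 * K z * k))) (at z)"
      using has_derivative_Re[OF F[of z, unfolded has_field_derivative_def]] by simp
    have "((\<lambda>z. Re (cnj m * f z) - Re (F z)) has_derivative (\<lambda>k. (Re k * (2 * Re (K z)) + Im k * (- 2 * Im (K z))) - Re (2 * K z * k))) (at z)"
      by (rule has_derivative_diff[OF d1 d2])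
    moreover have "(\<lambda>k. (Re k * (2 * Re (K z)) + Im k * (- 2 * Im (K z))) - Re (2 * K z * k)) = (\<lambda>k. 0)"
      by (auto simp: algebra_simps)
    ultimately show ?thesis by simp
  qed
  then obtain c1 where c1: "\<And>z. Re (cnj m * f z) - Re (F z) = c1"
    using has_derivative_zero_constant[OF convex_UNIV, of "\<lambda>z. Re (cnj m * f z) - Re (F z)"] by auto
  have frep: "f z = m * (of_real c1 + \<i> * of_real c2) + of_real (Re (F z)) * m" for z
  proof -
    have "m * (cnj m * f z) = (cnj m * m) * f z" by (simp only: ac_simps)
    then have "f z = m * (cnj m * f z)" using u by simp
    also have "cnj m * f z = of_real (Re (cnj m * f z)) + \<i> * of_real (Im (cnj m * f z))"
      by (rule complex_eq)
    also have "\<dots> = of_real (Re (F z) + c1) + \<i> * of_real c2"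
      using c1[of z] c2[of z] by (simp add: algebra_simps)
    finally show ?thesis by (simp add: algebra_simps)
  qed
  show ?thesis
  proof (cases "\<forall>z. F z = F 0")
    case True
    have fc: "f z = f 0" for z
    proof -
      have "F z = F 0" using True by blast
      then show ?thesis using frep[of z] frep[of 0] by simp
    qed
    have "range f = {f 0}" using fc by auto
    moreover have "Val_infinite f (f 0)"
      unfolding Val_infinite_def using fc infinite_UNIV_char_0[where 'a=complex] by simp
    ultimately show ?thesis using crit by blast
  next
    case False
    have "range f = {m * (of_real c1 + \<i> * of_real c2) + of_real t * m | t. True}"
    proof
      show "range f \<subseteq> {m * (of_real c1 + \<i> * of_real c2) + of_real t * m | t. True}"
        using frep by auto
      show "{m * (of_real c1 + \<i> * of_real c2) + of_real t * m | t. True} \<subseteq> range f"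
      proof
        fix w assume "w \<in> {m * (of_real c1 + \<i> * of_real c2) + of_real t * m | t. True}"
        then obtain t where t: "w = m * (of_real c1 + \<i> * of_real c2) + of_real t * m" by blast
        obtain z where "Re (F z) = t" using ReF_surj[OF holF False] by blast
        then have "f z = w" using frep[of z] t by simp
        then show "w \<in> range f" by blast
      qed
    qed
    moreover have "m \<noteq> 0" using nm by auto
    ultimately have line: "is_line (range f)" unfolding is_line_def by blast
    have "{z. Re (F z) = Re (F 0)} \<subseteq> {z. f z = f 0}"
      using frep by auto
    then have "Val_infinite f (f 0)"
      unfolding Val_infinite_def using level_infinite[OF holF False] infinite_super by blast
    then show ?thesis using line crit by blast
  qed
qed

end
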